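(* Let $m=2^l$ with $l>0$. If $\mathbf{u}\in K(\mathbb{Z}_m^3)$, then $D^2(\mathbf{u})=H(\mathbf{u})$.
   Context: The Ducci function $D:\mathbb{Z}_m^3\to\mathbb{Z}_m^3$ is $D(x_1,x_2,x_3)=(x_1+x_2,\,x_2+x_3,\,x_3+x_1)$, entries mod $m$. $H:\mathbb{Z}_m^3\to\mathbb{Z}_m^3$ is the shift $H(x_1,x_2,x_3)=(x_2,x_3,x_1)$. $K(\mathbb{Z}_m^3)$ is the set of $\mathbf{u}$ lying in the Ducci cycle of some tuple, i.e. with $D^k(\mathbf{u})=\mathbf{u}$ for some $k\ge1$. *)

theory Defs
  imports Main
begin

type_synonym triple = "int \<times> int \<times> int"

definition Zm3 :: "int \<Rightarrow> triple set" where
  "Zm3 m = {(a, b, c). 0 \<le> a \<and> a < m \<and> 0 \<le> b \<and> b < m \<and> 0 \<le> c \<and> c < m}"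

definition ducci :: "int \<Rightarrow> triple \<Rightarrow> triple" where
  "ducci m u = (case u of (x1, x2, x3) \<Rightarrow>
      ((x1 + x2) mod m, (x2 + x3) mod m, (x3 + x1) mod m))"

definition shiftH :: "triple \<Rightarrow> triple" where
  "shiftH u = (case u of (x1, x2, x3) \<Rightarrow> (x2, x3, x1))"

definition ducciK :: "int \<Rightarrow> triple set" where
  "ducciK m = {u \<in> Zm3 m. \<exists>k\<ge>1. (ducci m ^^ k) u = u}"

end

theory Submission
  imports Defs
begin

lemma m3: "((x::int) mod m + y mod m + z mod m) mod m = (x+y+z) mod m"
proof -
  have "(x mod m + y mod m + z mod m) mod m = ((x mod m + y mod m) mod m + z mod m) mod m"
    by (rule mod_add_left_eq[symmetric])
  also have "\<dots> = ((x + y) mod m + z mod m) mod m" by (simp only: mod_add_eq)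
  also have "\<dots> = (x+y+z) mod m" by (simp only: mod_add_eq)
  finally show ?thesis .
qed

definition tsum :: "triple \<Rightarrow> int" where
  "tsum v = (case v of (a, b, c) \<Rightarrow> a + b + c)"

lemma tsum_ducci: "tsum (ducci m v) mod m = (2 * tsum v) mod m"
proof -
  obtain a b c where v: "v = (a, b, c)" by (cases v) auto
  have "tsum (ducci m v) = (a + b) mod m + (b + c) mod m + (c + a) mod m"
    by (simp add: v ducci_def tsum_def)
  then have "tsum (ducci m v) mod m = ((a + b) + (b + c) + (c + a)) mod m"
    using m3 by simp
  also have "\<dots> = (2 * tsum v) mod m" by (simp add: v tsum_def algebra_simps)
  finally show ?thesis .
qed

lemma tsum_iter: "tsum ((ducci m ^^ n) v) mod m = (2 ^ n * tsum v) mod m"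
proof (induction n)
  case 0 then show ?case by simp
next
  case (Suc n)
  have "tsum ((ducci m ^^ Suc n) v) mod m = (2 * tsum ((ducci m ^^ n) v)) mod m"
    by (simp add: tsum_ducci)
  also have "\<dots> = (2 * (tsum ((ducci m ^^ n) v) mod m)) mod m"
    by (simp add: mod_mult_right_eq)
  also have "\<dots> = (2 * ((2 ^ n * tsum v) mod m)) mod m" using Suc by simp
  also have "\<dots> = (2 ^ Suc n * tsum v) mod m"
    by (simp add: mod_mult_right_eq mult.assoc)
  finally show ?case .
qed

lemma iter_periodic:
  assumes "(f ^^ k) u = u" shows "(f ^^ (k * j)) u = u"
proof (induction j)
  case 0 then show ?case by simp
next
  case (Suc j)
  have "(f ^^ (k * Suc j)) u = (f ^^ k) ((f ^^ (k * j)) u)"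
    by (simp add: funpow_add add.commute)
  then show ?case using Suc assms by simp
qed

lemma step2:
  fixes a b c m :: int
  assumes s: "(a + b + c) mod m = 0" and r: "0 \<le> b" "b < m"
  shows "((a + b) mod m + (b + c) mod m) mod m = b"
proof -
  have "((a + b) mod m + (b + c) mod m) mod m = ((a + b) + (b + c)) mod m"
    by (rule mod_add_eq)
  also have "\<dots> = ((a + b + c) + b) mod m" by (simp add: algebra_simps)
  also have "\<dots> = ((a + b + c) mod m + b) mod m" by (rule mod_add_left_eq[symmetric])
  also have "\<dots> = b" using s r by simp
  finally show ?thesis .
qed

theorem lemma4p2:
  fixes l :: nat and m :: int and u :: triple
  assumes "l > 0" and "m = 2 ^ l" and "u \<in> ducciK m"
  shows "(ducci m ^^ 2) u = shiftH u"
proof -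
  obtain k where k: "k \<ge> 1" "(ducci m ^^ k) u = u" and uz: "u \<in> Zm3 m"
    using assms(3) unfolding ducciK_def by blast
  have p: "(ducci m ^^ (k * l)) u = u" using iter_periodic[OF k(2)] .
  have dv: "m dvd 2 ^ (k * l)" using assms(2) k(1)
    by (simp add: le_imp_power_dvd)
  have "tsum u mod m = (2 ^ (k * l) * tsum u) mod m"
    using tsum_iter[where m=m and n="k * l" and v=u] p by simp
  also have "\<dots> = 0" using dv by simp
  finally have s0: "tsum u mod m = 0" .
  obtain a b c where u: "u = (a, b, c)" by (cases u) auto
  have ranges: "0 \<le> a" "a < m" "0 \<le> b" "b < m" "0 \<le> c" "c < m"
    using uz by (auto simp: u Zm3_def)
  have s: "(a + b + c) mod m = 0" using s0 by (simp add: u tsum_def)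
  have s2: "(b + c + a) mod m = 0" using s by (simp add: algebra_simps)
  have s3: "(c + a + b) mod m = 0" using s by (simp add: algebra_simps)
  have e1: "((a + b) mod m + (b + c) mod m) mod m = b" by (rule step2[OF s ranges(3,4)])
  have e2: "((b + c) mod m + (c + a) mod m) mod m = c" by (rule step2[OF s2 ranges(5,6)])
  have e3: "((c + a) mod m + (a + b) mod m) mod m = a" by (rule step2[OF s3 ranges(1,2)])
  have "(ducci m ^^ 2) u = ducci m (ducci m u)" by (simp add: numeral_2_eq_2)
  also have "\<dots> = (((a + b) mod m + (b + c) mod m) mod m,
      ((b + c) mod m + (c + a) mod m) mod m, ((c + a) mod m + (a + b) mod m) mod m)"
    by (simp only: u ducci_def prod.case)
  also have "\<dots> = shiftH u" by (simp only: e1 e2 e3 u shiftH_def prod.case)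
  finally show ?thesis .
qed

end
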